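(* Let $G=(V,E)$ be a finite graph and let $\underline{r}^G=(r_v)_{v\in V}\in\mathbb{Z}^{V}$. Let $H$ be an arbitrary $2$-cover of $G$, and let $G\times K_2$ be the bipartite double cover of $G$. Let $\underline{r}$ denote the vector induced by $\underline{r}^G$ on $H$ and on $G\times K_2$, i.e. each lift $u'$ of a vertex $u\in V$ gets value $r_{u'}=r_u$. Then $$h_{\underline{r}}(G\times K_2)\geq h_{\underline{r}}(H).$$ In other words, for any $\underline{r}\in\mathbb{Z}^{V}$, among all $2$-covers $H$ of $G$ the quantity $h_{\underline{r}}(H)$ is maximized by $G\times K_2$.
   Context: A $2$-cover of $G$ is a graph with vertex set $V\times\{0,1\}$ obtained by choosing, for every edge $uv\in E$, either the pair of edges $(u,0)(v,0),(u,1)(v,1)$ or the pair $(u,0)(v,1),(u,1)(v,0)$, and having no other edges. The bipartite double cover $G\times K_2$ is the $2$-cover in which the second choice is made for every edge. For a graph $F$ and $\underline{r}=(r_v)\in\mathbb{Z}^{V(F)}$, $h_{\underline{r}}(F)$ denotes the number of subgraphs (edge subsets) $S$ of $F$ such that every vertex $v$ is incident to exactly $r_v$ edges of $S$. *)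

theory Defs
  imports Main
begin

definition simple_graph :: "'a set \<Rightarrow> 'a set set \<Rightarrow> bool" where
  "simple_graph V E \<longleftrightarrow> finite V \<and> (\<forall>e\<in>E. e \<subseteq> V \<and> card e = 2)"

text \<open>Edges of the 2-cover with vertex set V \<times> {False,True} (False = 0, True = 1)
  determined by the choice s: s e = True means the "parallel" pair
  (u,0)(v,0),(u,1)(v,1); s e = False means the "crossed" pair (u,0)(v,1),(u,1)(v,0).\<close>
definition cover_edges :: "'a set set \<Rightarrow> ('a set \<Rightarrow> bool) \<Rightarrow> ('a \<times> bool) set set" where
  "cover_edges E s = {{(u, i), (v, j)} | u v i j.
       {u, v} \<in> E \<and> u \<noteq> v \<and> (if s {u, v} then i = j else i \<noteq> j)}"

definition two_cover :: "'a set set \<Rightarrow> ('a \<times> bool) set set \<Rightarrow> bool" where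
  "two_cover E EH \<longleftrightarrow> (\<exists>s. EH = cover_edges E s)"

definition double_cover_edges :: "'a set set \<Rightarrow> ('a \<times> bool) set set" where
  "double_cover_edges E = cover_edges E (\<lambda>_. False)"

definition h_count :: "'b set \<Rightarrow> 'b set set \<Rightarrow> ('b \<Rightarrow> int) \<Rightarrow> nat" where
  "h_count VF EF r = card {S. S \<subseteq> EF \<and> (\<forall>v\<in>VF. int (card {e\<in>S. v \<in> e}) = r v)}"

end

theory Submission
  imports Defs "HOL-Library.FuncSet"
begin



lemma two_color:
  assumes "finite X"
    and "\<forall>x\<in>X. p x \<in> X \<and> p (p x) = x \<and> p x \<noteq> x"
    and "\<forall>x\<in>X. q x \<in> X \<and> q (q x) = x \<and> q x \<noteq> x"
  shows "\<exists>f::'a \<Rightarrow> bool. \<forall>x\<in>X. f (p x) \<noteq> f x \<and> f (q x) \<noteq> f x"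
  using assms
proof (induction "card X" arbitrary: X q rule: less_induct)
  case less
  show ?case
  proof (cases "X = {}")
    case True then show ?thesis by simp
  next
    case False
    then obtain x where x: "x \<in> X" by blast
    define y where "y = p x"
    have y: "y \<in> X" "p y = x" "y \<noteq> x" using less.prems x y_def by auto
    define X' where "X' = X - {x, y}"
    have fX': "finite X'" using less.prems X'_def by simp
    have cX': "card X' < card X" unfolding X'_def using x y less.prems(1)
      by (intro psubset_card_mono) auto
    have pX': "\<forall>z\<in>X'. p z \<in> X' \<and> p (p z) = z \<and> p z \<noteq> z"
    proof
      fix z assume "z \<in> X'"
      then have z: "z \<in> X" "z \<noteq> x" "z \<noteq> y" using X'_def by auto
      have pz: "p z \<in> X" "p (p z) = z" "p z \<noteq> z" using z less.prems(2) by auto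
      have "p z \<noteq> x" using pz z y_def by metis
      moreover have "p z \<noteq> y" using pz z y by metis
      ultimately show "p z \<in> X' \<and> p (p z) = z \<and> p z \<noteq> z" using pz X'_def by auto
    qed
    show ?thesis
    proof (cases "q x = y")
      case True
      have qy: "q y = x" using True less.prems(3) x by metis
      have qX': "\<forall>z\<in>X'. q z \<in> X' \<and> q (q z) = z \<and> q z \<noteq> z"
      proof
        fix z assume "z \<in> X'"
        then have z: "z \<in> X" "z \<noteq> x" "z \<noteq> y" using X'_def by auto
        have qz: "q z \<in> X" "q (q z) = z" "q z \<noteq> z" using z less.prems(3) by auto
        have "q z \<noteq> x" using qz z True by metis
        moreover have "q z \<noteq> y" using qz z qy by metis
        ultimately show "q z \<in> X' \<and> q (q z) = z \<and> q z \<noteq> z" using qz X'_def by auto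
      qed
      obtain f :: "'a \<Rightarrow> bool" where f: "\<forall>z\<in>X'. f (p z) \<noteq> f z \<and> f (q z) \<noteq> f z"
        using less.hyps[OF cX' fX' pX' qX'] by blast
      define g where "g = f(x := True, y := False)"
      have "\<forall>z\<in>X. g (p z) \<noteq> g z \<and> g (q z) \<noteq> g z"
      proof
        fix z assume z: "z \<in> X"
        show "g (p z) \<noteq> g z \<and> g (q z) \<noteq> g z"
        proof (cases "z \<in> X'")
          case True
          then have "p z \<in> X'" "q z \<in> X'" using pX' qX' by auto
          then show ?thesis using f True unfolding g_def X'_def by auto
        next
          case False
          then have "z = x \<or> z = y" using z X'_def by auto
          then show ?thesis using y y_def True qy unfolding g_def by auto
        qed
      qed
      then show ?thesis by blast
    next
      case False
      define a where "a = q x"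
      define b where "b = q y"
      have a: "a \<in> X" "q a = x" "a \<noteq> x" "a \<noteq> y" using less.prems(3) x False a_def by auto
      have b: "b \<in> X" "q b = y" "b \<noteq> y" "b \<noteq> x" using less.prems(3) y False b_def a_def
        by metis+
      have ab: "a \<noteq> b" using a(2) b(2) y(3) by metis
      define q' where "q' = q(a := b, b := a)"
      have qX': "\<forall>z\<in>X'. q' z \<in> X' \<and> q' (q' z) = z \<and> q' z \<noteq> z"
      proof
        fix z assume z: "z \<in> X'"
        show "q' z \<in> X' \<and> q' (q' z) = z \<and> q' z \<noteq> z"
        proof (cases "z = a \<or> z = b")
          case True
          then show ?thesis using a b ab z unfolding q'_def X'_def by auto
        next
          case False
          have qz: "q z \<in> X" "q (q z) = z" "q z \<noteq> z" using less.prems(3) z X'_def by auto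
          have "q z \<noteq> x" using False qz a_def by metis
          moreover have "q z \<noteq> y" using False qz b_def by metis
          moreover have zxy: "z \<noteq> x" "z \<noteq> y" using z X'_def by auto
          moreover have "q z \<noteq> a" using a(2) zxy qz by metis
          moreover have "q z \<noteq> b" using b(2) zxy qz by metis
          ultimately show ?thesis using False qz unfolding q'_def X'_def by auto
        qed
      qed
      obtain f :: "'a \<Rightarrow> bool" where f: "\<forall>z\<in>X'. f (p z) \<noteq> f z \<and> f (q' z) \<noteq> f z"
        using less.hyps[OF cX' fX' pX' qX'] by blast
      have aX': "a \<in> X'" "b \<in> X'" using a b X'_def by auto
      have q'ab: "q' a = b" unfolding q'_def using ab by simp
      define g where "g = f(x := \<not> f a, y := f a)"
      have fba: "f b \<noteq> f a" using f aX'(1) q'ab by metis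
      have gX': "\<And>w. w \<in> X' \<Longrightarrow> g w = f w" unfolding g_def X'_def by auto
      have gx: "g x = (\<not> f a)" and gy: "g y = f a" using y(3) unfolding g_def by auto
      have "\<forall>z\<in>X. g (p z) \<noteq> g z \<and> g (q z) \<noteq> g z"
      proof
        fix z assume z: "z \<in> X"
        show "g (p z) \<noteq> g z \<and> g (q z) \<noteq> g z"
        proof (cases "z \<in> X'")
          case True
          then have pz: "p z \<in> X'" using pX' by blast
          have fpz: "f (p z) \<noteq> f z" using f True by blast
          have gpz: "g (p z) \<noteq> g z" using gX'[OF pz] gX'[OF True] fpz by simp
          have "g (q z) \<noteq> g z"
          proof (cases "z = a")
            case True
            then show ?thesis using gx gX' aX' a(2) by simp
          next
            case za: False
            show ?thesis
            proof (cases "z = b")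
              case True
              then show ?thesis using gy gX' aX' b(2) fba by simp
            next
              case False
              then have "q' z = q z" using za unfolding q'_def by simp
              moreover have "q' z \<in> X'" using qX' True by blast
              moreover have "f (q' z) \<noteq> f z" using f True by blast
              ultimately show ?thesis using gX' True by metis
            qed
          qed
          then show ?thesis using gpz by blast
        next
          case False
          then have "z = x \<or> z = y" using z X'_def by auto
          then show ?thesis
          proof
            assume zx: "z = x"
            show ?thesis using zx gx gy y_def a_def[symmetric] gX' aX' by simp
          next
            assume zy: "z = y"
            show ?thesis using zy gx gy y(2) b_def[symmetric] gX' aX' fba by simp
          qed
        qed
      qed
      then show ?thesis by blast
    qed
  qed
qed




lemma glue_bij:
  assumes "\<And>k. k \<in> K \<Longrightarrow> bij_betw (f k) {x\<in>A. \<kappa> x = k} {y\<in>B. \<kappa>' y = k}"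
    and "\<forall>x\<in>A. \<kappa> x \<in> K" "\<forall>y\<in>B. \<kappa>' y \<in> K"
  shows "bij_betw (\<lambda>x. f (\<kappa> x) x) A B \<and> (\<forall>x\<in>A. \<kappa>' (f (\<kappa> x) x) = \<kappa> x)"
proof -
  have cls: "\<And>x. x \<in> A \<Longrightarrow> f (\<kappa> x) x \<in> B \<and> \<kappa>' (f (\<kappa> x) x) = \<kappa> x"
  proof -
    fix x assume x: "x \<in> A"
    have "bij_betw (f (\<kappa> x)) {z\<in>A. \<kappa> z = \<kappa> x} {y\<in>B. \<kappa>' y = \<kappa> x}"
      using assms(1) assms(2) x by blast
    then have "f (\<kappa> x) x \<in> {y\<in>B. \<kappa>' y = \<kappa> x}" using x bij_betwE by blast
    then show "f (\<kappa> x) x \<in> B \<and> \<kappa>' (f (\<kappa> x) x) = \<kappa> x" by blast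
  qed
  have inj: "inj_on (\<lambda>x. f (\<kappa> x) x) A"
  proof (rule inj_onI)
    fix x y assume x: "x \<in> A" and y: "y \<in> A" and e: "f (\<kappa> x) x = f (\<kappa> y) y"
    have k: "\<kappa> x = \<kappa> y" using cls[OF x] cls[OF y] e by metis
    have "inj_on (f (\<kappa> x)) {z\<in>A. \<kappa> z = \<kappa> x}"
      using assms(1) assms(2) x bij_betw_def by blast
    then show "x = y" using x y k e by (auto dest: inj_onD)
  qed
  have surj: "B \<subseteq> (\<lambda>x. f (\<kappa> x) x) ` A"
  proof
    fix y assume y: "y \<in> B"
    have "bij_betw (f (\<kappa>' y)) {z\<in>A. \<kappa> z = \<kappa>' y} {w\<in>B. \<kappa>' w = \<kappa>' y}"
      using assms(1) assms(3) y by blast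
    then have "y \<in> f (\<kappa>' y) ` {z\<in>A. \<kappa> z = \<kappa>' y}" using y bij_betw_imp_surj_on by fastforce
    then obtain x where "x \<in> A" "\<kappa> x = \<kappa>' y" "y = f (\<kappa>' y) x" by blast
    then show "y \<in> (\<lambda>x. f (\<kappa> x) x) ` A" by force
  qed
  show ?thesis unfolding bij_betw_def using inj surj cls by blast
qed

definition Inv :: "('e \<times> 'v) set \<Rightarrow> (('e \<times> 'v) \<Rightarrow> ('e \<times> 'v)) set" where
  "Inv X = {p \<in> X \<rightarrow>\<^sub>E X. \<forall>x\<in>X. p (p x) = x \<and> p x \<noteq> x \<and> snd (p x) = snd x}"

definition cnt :: "('e \<times> 'v) set \<Rightarrow> ('e \<times> 'v) set \<Rightarrow> nat" where
  "cnt X Z = card {p \<in> Inv X. \<forall>x\<in>X. (p x \<in> Z) = (x \<notin> Z)}"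

definition bal :: "('e \<times> 'v) set \<Rightarrow> ('e \<times> 'v) set \<Rightarrow> bool" where
  "bal X Z \<longleftrightarrow> Z \<subseteq> X \<and> (\<forall>u. card {x\<in>X. snd x = u \<and> x \<in> Z} = card {x\<in>X. snd x = u \<and> x \<notin> Z})"

lemma finite_Inv: "finite X \<Longrightarrow> finite (Inv X)"
  unfolding Inv_def by (rule finite_subset[of _ "X \<rightarrow>\<^sub>E X"]) (auto intro: finite_PiE)

lemma exists_class_bij:
  assumes "finite A" "finite B" "\<And>k. card {x\<in>A. \<kappa> x = k} = card {y\<in>B. \<kappa>' y = k}"
  shows "\<exists>g. bij_betw g A B \<and> (\<forall>x\<in>A. \<kappa>' (g x) = \<kappa> x)"
proof -
  define f where "f k = (SOME h. bij_betw h {x\<in>A. \<kappa> x = k} {y\<in>B. \<kappa>' y = k})" for k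
  have "bij_betw (f k) {x\<in>A. \<kappa> x = k} {y\<in>B. \<kappa>' y = k}" for k
  proof -
    have "\<exists>h. bij_betw h {x\<in>A. \<kappa> x = k} {y\<in>B. \<kappa>' y = k}"
      using assms by (intro finite_same_card_bij) auto
    then show ?thesis unfolding f_def by (rule someI_ex)
  qed
  then have "bij_betw (\<lambda>x. f (\<kappa> x) x) A B \<and> (\<forall>x\<in>A. \<kappa>' (f (\<kappa> x) x) = \<kappa> x)"
    by (intro glue_bij[where K = UNIV]) auto
  then show ?thesis by blast
qed

lemma half_card:
  assumes "finite X" "card {x\<in>X. snd x = u \<and> P x} = card {x\<in>X. snd x = u \<and> \<not> P x}"
  shows "2 * card {x\<in>X. snd x = u \<and> P x} = card {x\<in>X. snd x = u}"
proof -
  have "{x\<in>X. snd x = u} = {x\<in>X. snd x = u \<and> P x} \<union> {x\<in>X. snd x = u \<and> \<not> P x}" by blast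
  moreover have "{x\<in>X. snd x = u \<and> P x} \<inter> {x\<in>X. snd x = u \<and> \<not> P x} = {}" by blast
  ultimately have "card {x\<in>X. snd x = u} = card {x\<in>X. snd x = u \<and> P x} + card {x\<in>X. snd x = u \<and> \<not> P x}"
    using assms(1) by (simp add: card_Un_disjoint)
  then show ?thesis using assms(2) by simp
qed

lemma bal_half:
  assumes "finite X" "bal X Z"
  shows "2 * card {x\<in>X. snd x = u \<and> x \<in> Z} = card {x\<in>X. snd x = u}"
  using half_card[OF assms(1), of u "\<lambda>x. x \<in> Z"] assms(2) unfolding bal_def by blast

lemma cnt_pos:
  assumes "finite X" "bal X Z"
  shows "cnt X Z > 0"
proof -
  have ZX: "Z \<subseteq> X" using assms(2) bal_def by blast
  have "\<exists>g. bij_betw g Z (X - Z) \<and> (\<forall>x\<in>Z. snd (g x) = snd x)"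
  proof (rule exists_class_bij)
    show "finite Z" "finite (X - Z)" using assms(1) ZX finite_subset by auto
    fix k
    have e1: "{x\<in>Z. snd x = k} = {x\<in>X. snd x = k \<and> x \<in> Z}" using ZX by blast
    have e2: "{y\<in>X-Z. snd y = k} = {x\<in>X. snd x = k \<and> x \<notin> Z}" by blast
    have "card {x\<in>X. snd x = k \<and> x \<in> Z} = card {x\<in>X. snd x = k \<and> x \<notin> Z}"
      using assms(2) unfolding bal_def by blast
    then show "card {x\<in>Z. snd x = k} = card {y\<in>X-Z. snd y = k}" unfolding e1 e2 .
  qed
  then obtain g where g: "bij_betw g Z (X - Z)" "\<forall>x\<in>Z. snd (g x) = snd x" by blast
  define h where "h = inv_into Z g"
  have h: "bij_betw h (X - Z) Z" using g(1) h_def by (simp add: bij_betw_inv_into)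
  have gh: "\<And>y. y \<in> X - Z \<Longrightarrow> g (h y) = y" using g(1) h_def by (simp add: bij_betw_inv_into_right)
  have hg: "\<And>x. x \<in> Z \<Longrightarrow> h (g x) = x" using g(1) h_def by (simp add: bij_betw_inv_into_left)
  have hZ: "\<And>y. y \<in> X - Z \<Longrightarrow> h y \<in> Z" using h bij_betwE by blast
  have gZ: "\<And>x. x \<in> Z \<Longrightarrow> g x \<in> X - Z" using g(1) bij_betwE by blast
  define p where "p = restrict (\<lambda>x. if x \<in> Z then g x else h x) X"
  have pe: "\<And>x. x \<in> X \<Longrightarrow> p x = (if x \<in> Z then g x else h x)" unfolding p_def by simp
  have pZ: "\<And>x. x \<in> Z \<Longrightarrow> p x = g x" using pe ZX by (meson subsetD)
  have pN: "\<And>x. x \<in> X \<Longrightarrow> x \<notin> Z \<Longrightarrow> p x = h x" using pe by simp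
  have pin: "\<And>x. x \<in> X \<Longrightarrow> p x \<in> X \<and> (p x \<in> Z) = (x \<notin> Z)"
  proof -
    fix x assume x: "x \<in> X"
    show "p x \<in> X \<and> (p x \<in> Z) = (x \<notin> Z)"
    proof (cases "x \<in> Z")
      case True then show ?thesis using pZ gZ by simp
    next
      case False then have "h x \<in> Z" using hZ x by simp
      then show ?thesis using pN[OF x False] ZX False by (simp add: subsetD)
    qed
  qed
  have "p \<in> Inv X"
    unfolding Inv_def
  proof (intro CollectI conjI ballI)
    show "p \<in> X \<rightarrow>\<^sub>E X" unfolding p_def restrict_PiE_iff using pe pin by simp
    fix x assume x: "x \<in> X"
    show "p (p x) = x"
    proof (cases "x \<in> Z")
      case True
      have "g x \<in> X" "g x \<notin> Z" using gZ[OF True] by auto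
      then show ?thesis using pZ[OF True] pN hg[OF True] by simp
    next
      case False
      have "h x \<in> Z" using hZ x False by simp
      then show ?thesis using pN[OF x False] pZ gh x False by simp
    qed
    show "p x \<noteq> x" using pin[OF x] by auto
    show "snd (p x) = snd x"
    proof (cases "x \<in> Z")
      case True then show ?thesis using pZ g(2) by simp
    next
      case False
      have hx: "h x \<in> Z" using hZ x False by simp
      then have "snd (g (h x)) = snd (h x)" using g(2) by blast
      then show ?thesis using gh[of x] x False pN[OF x False] by simp
    qed
  qed
  moreover have "\<forall>x\<in>X. (p x \<in> Z) = (x \<notin> Z)" using pin by blast
  ultimately have mem: "p \<in> {p \<in> Inv X. \<forall>x\<in>X. (p x \<in> Z) = (x \<notin> Z)}" by blast
  moreover have "finite {p \<in> Inv X. \<forall>x\<in>X. (p x \<in> Z) = (x \<notin> Z)}" using finite_Inv[OF assms(1)] by simp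
  ultimately show ?thesis unfolding cnt_def using card_gt_0_iff by blast
qed

lemma cnt_le:
  assumes "finite X" "bal X Z" "bal X Z'"
  shows "cnt X Z \<le> cnt X Z'"
proof -
  have ZX: "Z \<subseteq> X" "Z' \<subseteq> X" using assms bal_def by auto
  have "\<exists>g. bij_betw g X X \<and> (\<forall>x\<in>X. (snd (g x), g x \<in> Z') = (snd x, x \<in> Z))"
  proof (rule exists_class_bij)
    show "finite X" "finite X" using assms(1) by auto
    fix k :: "'b \<times> bool"
    obtain u b where k: "k = (u, b)" by fastforce
    have h1: "2 * card {x\<in>X. snd x = u \<and> x \<in> Z} = card {x\<in>X. snd x = u}"
      using bal_half[OF assms(1,2)] by blast
    have h2: "2 * card {x\<in>X. snd x = u \<and> x \<in> Z'} = card {x\<in>X. snd x = u}"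
      using bal_half[OF assms(1,3)] by blast
    have e1: "card {x\<in>X. snd x = u \<and> x \<in> Z} = card {x\<in>X. snd x = u \<and> x \<in> Z'}" using h1 h2 by simp
    have e2: "card {x\<in>X. snd x = u \<and> x \<notin> Z} = card {x\<in>X. snd x = u \<and> x \<notin> Z'}"
      using e1 assms(2,3) unfolding bal_def by metis
    show "card {x\<in>X. (snd x, x \<in> Z) = k} = card {y\<in>X. (snd y, y \<in> Z') = k}"
      using e1 e2 unfolding k by (cases b) auto
  qed
  then obtain s where s: "bij_betw s X X" "\<And>x. x \<in> X \<Longrightarrow> snd (s x) = snd x"
      "\<And>x. x \<in> X \<Longrightarrow> (s x \<in> Z') = (x \<in> Z)" by auto
  define s' where "s' = inv_into X s"
  have s'X: "\<And>x. x \<in> X \<Longrightarrow> s' x \<in> X" using s(1) s'_def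
    by (metis bij_betw_imp_surj_on inv_into_into)
  have ss': "\<And>x. x \<in> X \<Longrightarrow> s (s' x) = x" using s(1) s'_def by (simp add: bij_betw_inv_into_right)
  have s's: "\<And>x. x \<in> X \<Longrightarrow> s' (s x) = x" using s(1) s'_def by (simp add: bij_betw_inv_into_left)
  have sX: "\<And>x. x \<in> X \<Longrightarrow> s x \<in> X" using s(1) bij_betwE by blast
  define \<Phi> where "\<Phi> p = restrict (\<lambda>x. s (p (s' x))) X" for p :: "'a \<times> 'b \<Rightarrow> 'a \<times> 'b"
  let ?A = "{p \<in> Inv X. \<forall>x\<in>X. (p x \<in> Z) = (x \<notin> Z)}"
  let ?B = "{p \<in> Inv X. \<forall>x\<in>X. (p x \<in> Z') = (x \<notin> Z')}"
  have maps: "\<Phi> p \<in> ?B" if p: "p \<in> ?A" for p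
  proof -
    have pX: "\<And>x. x \<in> X \<Longrightarrow> p x \<in> X" and pp: "\<And>x. x \<in> X \<Longrightarrow> p (p x) = x"
      and pfp: "\<And>x. x \<in> X \<Longrightarrow> p x \<noteq> x" and psnd: "\<And>x. x \<in> X \<Longrightarrow> snd (p x) = snd x"
      and pZ: "\<And>x. x \<in> X \<Longrightarrow> (p x \<in> Z) = (x \<notin> Z)"
      using p unfolding Inv_def by auto
    have "\<Phi> p \<in> Inv X" unfolding Inv_def
    proof (intro CollectI conjI ballI)
      show "\<Phi> p \<in> X \<rightarrow>\<^sub>E X" unfolding \<Phi>_def using sX pX s'X by auto
      fix x assume x: "x \<in> X"
      have y: "s' x \<in> X" using s'X x .
      have "\<Phi> p (\<Phi> p x) = s (p (s' (s (p (s' x)))))" unfolding \<Phi>_def using x sX pX y by auto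
      also have "\<dots> = x" using s's pX y pp ss' x by simp
      finally show "\<Phi> p (\<Phi> p x) = x" .
      show "\<Phi> p x \<noteq> x"
      proof
        assume "\<Phi> p x = x"
        then have "s (p (s' x)) = s (s' x)" unfolding \<Phi>_def using x ss' by auto
        then have "p (s' x) = s' x" using s's pX y by metis
        then show False using pfp y by blast
      qed
      show "snd (\<Phi> p x) = snd x" unfolding \<Phi>_def using x s(2) pX y psnd ss'
        by (metis restrict_apply')
    qed
    moreover have "\<forall>x\<in>X. (\<Phi> p x \<in> Z') = (x \<notin> Z')"
    proof
      fix x assume x: "x \<in> X"
      have y: "s' x \<in> X" using s'X x .
      have "(\<Phi> p x \<in> Z') = (p (s' x) \<in> Z)" unfolding \<Phi>_def using x s(3) pX y by auto
      also have "\<dots> = (s' x \<notin> Z)" using pZ y by blast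
      also have "\<dots> = (x \<notin> Z')" using s(3)[OF y] ss' x by auto
      finally show "(\<Phi> p x \<in> Z') = (x \<notin> Z')" .
    qed
    ultimately show ?thesis by blast
  qed
  have inj: "inj_on \<Phi> ?A"
  proof (rule inj_onI)
    fix p1 p2 assume p1: "p1 \<in> ?A" and p2: "p2 \<in> ?A" and e: "\<Phi> p1 = \<Phi> p2"
    show "p1 = p2"
    proof (rule PiE_ext)
      show "p1 \<in> X \<rightarrow>\<^sub>E X" "p2 \<in> X \<rightarrow>\<^sub>E X" using p1 p2 unfolding Inv_def by auto
      fix y assume y: "y \<in> X"
      have "\<Phi> p1 (s y) = \<Phi> p2 (s y)" using e by simp
      then have "s (p1 y) = s (p2 y)" unfolding \<Phi>_def using sX[OF y] s's[OF y] by simp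
      moreover have "p1 y \<in> X" "p2 y \<in> X" using p1 p2 y unfolding Inv_def by auto
      ultimately show "p1 y = p2 y" using s's by metis
    qed
  qed
  have "card ?A \<le> card ?B"
  proof (rule card_inj_on_le[OF inj])
    show "\<Phi> ` ?A \<subseteq> ?B" using maps by blast
    show "finite ?B" using finite_Inv[OF assms(1)] by simp
  qed
  then show ?thesis unfolding cnt_def .
qed




definition degc :: "'a set set \<Rightarrow> ('a set \<Rightarrow> 'a \<Rightarrow> bool) \<Rightarrow> ('a set \<Rightarrow> bool set) \<Rightarrow> 'a \<Rightarrow> bool \<Rightarrow> nat" where
  "degc E t \<chi> u i = card {(e,k). e \<in> E \<and> u \<in> e \<and> k \<in> \<chi> e \<and> (k \<noteq> t e u) = i}"

definition valid :: "'a set set \<Rightarrow> 'a set \<Rightarrow> ('a \<Rightarrow> int) \<Rightarrow> ('a set \<Rightarrow> 'a \<Rightarrow> bool) \<Rightarrow> ('a set \<Rightarrow> bool set) set" where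
  "valid E V r t = {\<chi> \<in> E \<rightarrow>\<^sub>E UNIV. \<forall>u\<in>V. \<forall>i. int (degc E t \<chi> u i) = r u}"

definition Dof :: "'a set set \<Rightarrow> ('a set \<Rightarrow> bool set) \<Rightarrow> 'a set set" where
  "Dof E \<chi> = {e\<in>E. \<chi> e = UNIV}"

definition Tof :: "'a set set \<Rightarrow> ('a set \<Rightarrow> bool set) \<Rightarrow> 'a set set" where
  "Tof E \<chi> = {e\<in>E. card (\<chi> e) = 1}"

definition fib where
  "fib E V r t D T = {\<chi> \<in> valid E V r t. Dof E \<chi> = D \<and> Tof E \<chi> = T}"

definition darts :: "'a set set \<Rightarrow> ('a set \<times> 'a) set" where
  "darts T = (SIGMA e:T. e)"

definition lab :: "('a set \<Rightarrow> 'a \<Rightarrow> bool) \<Rightarrow> ('a set \<Rightarrow> bool set) \<Rightarrow> 'a set \<times> 'a \<Rightarrow> bool" where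
  "lab t \<chi> x = (the_elem (\<chi> (fst x)) \<noteq> t (fst x) (snd x))"

definition cmpt where
  "cmpt t \<chi> p X \<longleftrightarrow> (\<forall>x\<in>X. lab t \<chi> (p x) \<noteq> lab t \<chi> x)"

lemma bool_set_cases: "(B::bool set) = {} \<or> B = UNIV \<or> (\<exists>k. B = {k})"
proof (cases "True \<in> B"; cases "False \<in> B")
  assume "True \<in> B" "False \<in> B" then have "B = UNIV" using UNIV_bool by auto
  then show ?thesis by blast
next
  assume "True \<in> B" "False \<notin> B" then have "B = {True}" by (auto intro: bool_induct)
  then show ?thesis by blast
next
  assume "True \<notin> B" "False \<in> B" then have "B = {False}" by (auto intro: bool_induct)
  then show ?thesis by blast
next
  assume "True \<notin> B" "False \<notin> B" then have "B = {}" by (metis (full_types) equals0I)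
  then show ?thesis by blast
qed

lemma card_bool_set_1: "card (B::bool set) = 1 \<longleftrightarrow> (\<exists>k. B = {k})"
  by (simp add: card_1_singleton_iff)

lemma DT_disj: "Dof E \<chi> \<inter> Tof E \<chi> = {}"
  unfolding Dof_def Tof_def by auto

lemma deg_formula:
  assumes "finite E" "\<forall>e\<in>E. finite e"
  shows "degc E t \<chi> u i = card {e\<in>Dof E \<chi>. u \<in> e}
          + card {x\<in>darts (Tof E \<chi>). snd x = u \<and> lab t \<chi> x = i}"
proof -
  let ?D = "Dof E \<chi>" and ?T = "Tof E \<chi>"
  let ?A1 = "(\<lambda>e. (e, i \<noteq> t e u)) ` {e\<in>?D. u \<in> e}"
  let ?A2 = "(\<lambda>x. (fst x, the_elem (\<chi> (fst x)))) ` {x\<in>darts ?T. snd x = u \<and> lab t \<chi> x = i}"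
  have eq: "{(e,k). e \<in> E \<and> u \<in> e \<and> k \<in> \<chi> e \<and> (k \<noteq> t e u) = i} = ?A1 \<union> ?A2"
  proof (intro equalityI subsetI)
    fix y assume "y \<in> {(e,k). e \<in> E \<and> u \<in> e \<and> k \<in> \<chi> e \<and> (k \<noteq> t e u) = i}"
    then obtain e k where y: "y = (e,k)" "e \<in> E" "u \<in> e" "k \<in> \<chi> e" "(k \<noteq> t e u) = i" by blast
    consider "\<chi> e = UNIV" | k' where "\<chi> e = {k'}" using bool_set_cases[of "\<chi> e"] y(4) by blast
    then show "y \<in> ?A1 \<union> ?A2"
    proof cases
      case 1
      then have "e \<in> {e\<in>?D. u \<in> e}" using y unfolding Dof_def by auto
      moreover have "k = (i \<noteq> t e u)" using y(5) by auto
      ultimately show ?thesis using y(1) by blast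
    next
      case 2
      then have "k = k'" using y(4) by auto
      have "e \<in> ?T" using 2 y(2) unfolding Tof_def by auto
      then have "(e,u) \<in> {x\<in>darts ?T. snd x = u \<and> lab t \<chi> x = i}"
        using y 2 \<open>k = k'\<close> unfolding darts_def lab_def by auto
      moreover have "y = (fst (e,u), the_elem (\<chi> (fst (e,u))))" using y 2 \<open>k = k'\<close> by simp
      ultimately show ?thesis by blast
    qed
  next
    fix y assume "y \<in> ?A1 \<union> ?A2"
    then show "y \<in> {(e,k). e \<in> E \<and> u \<in> e \<and> k \<in> \<chi> e \<and> (k \<noteq> t e u) = i}"
    proof
      assume "y \<in> ?A1"
      then show ?thesis unfolding Dof_def by auto
    next
      assume "y \<in> ?A2"
      then obtain e where e: "e \<in> ?T" "u \<in> e" "lab t \<chi> (e,u) = i" "y = (e, the_elem (\<chi> e))"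
        unfolding darts_def by auto
      then obtain k where "\<chi> e = {k}" "e \<in> E" unfolding Tof_def by (auto simp: card_1_singleton_iff)
      then show ?thesis using e unfolding lab_def by auto
    qed
  qed
  have fin1: "finite {e\<in>?D. u \<in> e}" using assms(1) unfolding Dof_def by simp
  have finD: "finite (darts ?T)" unfolding darts_def Tof_def using assms by auto
  have fin2: "finite {x\<in>darts ?T. snd x = u \<and> lab t \<chi> x = i}" using finD by simp
  have f1: "fst ` ?A1 \<subseteq> ?D" by auto
  have f2: "fst ` ?A2 \<subseteq> ?T" unfolding darts_def by auto
  have disj: "?A1 \<inter> ?A2 = {}"
  proof (rule ccontr)
    assume "?A1 \<inter> ?A2 \<noteq> {}"
    then obtain y where y1: "y \<in> ?A1" and y2: "y \<in> ?A2" by (meson disjoint_iff)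
    have "fst y \<in> ?D" using subsetD[OF f1 imageI[OF y1]] .
    moreover have "fst y \<in> ?T" using subsetD[OF f2 imageI[OF y2]] .
    ultimately show False using DT_disj[of E \<chi>] by (meson disjoint_iff)
  qed
  have c1: "card ?A1 = card {e\<in>?D. u \<in> e}" by (rule card_image) (auto intro: inj_onI)
  have c2: "card ?A2 = card {x\<in>darts ?T. snd x = u \<and> lab t \<chi> x = i}"
  proof (rule card_image, rule inj_onI)
    fix x y assume "x \<in> {x\<in>darts ?T. snd x = u \<and> lab t \<chi> x = i}" "y \<in> {x\<in>darts ?T. snd x = u \<and> lab t \<chi> x = i}"
      "(fst x, the_elem (\<chi> (fst x))) = (fst y, the_elem (\<chi> (fst y)))"
    then have "fst x = fst y" "snd x = snd y" by auto
    then show "x = y" by (simp add: prod_eq_iff)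
  qed
  have "degc E t \<chi> u i = card (?A1 \<union> ?A2)" by (simp only: degc_def eq)
  also have "\<dots> = card ?A1 + card ?A2"
    by (rule card_Un_disjoint[OF finite_imageI[OF fin1] finite_imageI[OF fin2] disj])
  also have "\<dots> = card {e\<in>?D. u \<in> e} + card {x\<in>darts ?T. snd x = u \<and> lab t \<chi> x = i}"
    by (simp only: c1 c2)
  finally show ?thesis .
qed


lemma compat_half:
  assumes "p \<in> Inv X" "cmpt t \<chi> p X"
  shows "card {x\<in>X. snd x = u \<and> lab t \<chi> x = i} = card {x\<in>X. snd x = u \<and> \<not> lab t \<chi> x = i}"
proof -
  have p: "\<And>x. x \<in> X \<Longrightarrow> p x \<in> X \<and> p (p x) = x \<and> snd (p x) = snd x"
    using assms(1) unfolding Inv_def by auto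
  have c: "\<And>x. x \<in> X \<Longrightarrow> lab t \<chi> (p x) \<noteq> lab t \<chi> x" using assms(2) unfolding cmpt_def by blast
  have "bij_betw p {x\<in>X. snd x = u \<and> lab t \<chi> x = i} {x\<in>X. snd x = u \<and> \<not> lab t \<chi> x = i}"
  proof (rule bij_betw_byWitness[where f' = p])
    show "\<forall>a\<in>{x\<in>X. snd x = u \<and> lab t \<chi> x = i}. p (p a) = a" using p by blast
    show "\<forall>a\<in>{x\<in>X. snd x = u \<and> \<not> lab t \<chi> x = i}. p (p a) = a" using p by blast
    show "p ` {x\<in>X. snd x = u \<and> lab t \<chi> x = i} \<subseteq> {x\<in>X. snd x = u \<and> \<not> lab t \<chi> x = i}"
    proof
      fix y assume "y \<in> p ` {x\<in>X. snd x = u \<and> lab t \<chi> x = i}"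
      then obtain x where x: "x \<in> X" "snd x = u" "lab t \<chi> x = i" "y = p x" by blast
      then show "y \<in> {x\<in>X. snd x = u \<and> \<not> lab t \<chi> x = i}" using p[OF x(1)] c[OF x(1)] by auto
    qed
    show "p ` {x\<in>X. snd x = u \<and> \<not> lab t \<chi> x = i} \<subseteq> {x\<in>X. snd x = u \<and> lab t \<chi> x = i}"
    proof
      fix y assume "y \<in> p ` {x\<in>X. snd x = u \<and> \<not> lab t \<chi> x = i}"
      then obtain x where x: "x \<in> X" "snd x = u" "\<not> lab t \<chi> x = i" "y = p x" by blast
      then show "y \<in> {x\<in>X. snd x = u \<and> lab t \<chi> x = i}" using p[OF x(1)] c[OF x(1)] by auto
    qed
  qed
  then show ?thesis by (rule bij_betw_same_card)
qed

lemma finite_darts: "finite E \<Longrightarrow> \<forall>e\<in>E. finite e \<Longrightarrow> T \<subseteq> E \<Longrightarrow> finite (darts T)"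
  unfolding darts_def by (meson finite_SigmaI finite_subset subsetD)

lemma deg_compat:
  assumes "finite E" "\<forall>e\<in>E. finite e"
    and "p \<in> Inv (darts (Tof E \<chi>))" "cmpt t \<chi> p (darts (Tof E \<chi>))"
  shows "2 * degc E t \<chi> u i = 2 * card {e\<in>Dof E \<chi>. u \<in> e} + card {x\<in>darts (Tof E \<chi>). snd x = u}"
proof -
  have TE: "Tof E \<chi> \<subseteq> E" unfolding Tof_def by blast
  have fin: "finite (darts (Tof E \<chi>))" using finite_darts[OF assms(1,2) TE] .
  have h: "2 * card {x\<in>darts (Tof E \<chi>). snd x = u \<and> lab t \<chi> x = i} = card {x\<in>darts (Tof E \<chi>). snd x = u}"
    by (rule half_card[OF fin compat_half[OF assms(3,4)]])
  have d: "degc E t \<chi> u i = card {e\<in>Dof E \<chi>. u \<in> e} + card {x\<in>darts (Tof E \<chi>). snd x = u \<and> lab t \<chi> x = i}"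
    by (rule deg_formula[OF assms(1,2)])
  show ?thesis using h d by linarith
qed

lemma valid_bal:
  assumes "finite E" "\<forall>e\<in>E. finite e \<and> e \<subseteq> V" "\<chi> \<in> valid E V r t"
  shows "bal (darts (Tof E \<chi>)) {x\<in>darts (Tof E \<chi>). lab t \<chi> x}"
  unfolding bal_def
proof (intro conjI allI)
  show "{x\<in>darts (Tof E \<chi>). lab t \<chi> x} \<subseteq> darts (Tof E \<chi>)" by blast
  fix u
  let ?X = "darts (Tof E \<chi>)"
  have fe: "\<forall>e\<in>E. finite e" using assms(2) by blast
  show "card {x\<in>?X. snd x = u \<and> x \<in> {x\<in>?X. lab t \<chi> x}} = card {x\<in>?X. snd x = u \<and> x \<notin> {x\<in>?X. lab t \<chi> x}}"
  proof (cases "u \<in> V")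
    case True
    have "int (degc E t \<chi> u True) = r u" "int (degc E t \<chi> u False) = r u"
      using assms(3) True unfolding valid_def by auto
    then have "degc E t \<chi> u True = degc E t \<chi> u False" by simp
    then have "card {x\<in>?X. snd x = u \<and> lab t \<chi> x = True} = card {x\<in>?X. snd x = u \<and> lab t \<chi> x = False}"
      using deg_formula[OF assms(1) fe, of t \<chi> u] by simp
    moreover have "{x\<in>?X. snd x = u \<and> x \<in> {x\<in>?X. lab t \<chi> x}} = {x\<in>?X. snd x = u \<and> lab t \<chi> x = True}" by auto
    moreover have "{x\<in>?X. snd x = u \<and> x \<notin> {x\<in>?X. lab t \<chi> x}} = {x\<in>?X. snd x = u \<and> lab t \<chi> x = False}" by auto
    ultimately show ?thesis by simp
  next
    case False
    have "{x\<in>?X. snd x = u} = {}" using False assms(2) unfolding darts_def Tof_def by auto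
    then have a: "{x\<in>?X. snd x = u \<and> x \<in> {x\<in>?X. lab t \<chi> x}} = {}"
      and b: "{x\<in>?X. snd x = u \<and> x \<notin> {x\<in>?X. lab t \<chi> x}} = {}"
      by blast+
    show ?thesis by (simp only: a b)
  qed
qed

lemma compat_iff:
  assumes "p \<in> Inv X"
  shows "cmpt t \<chi> p X \<longleftrightarrow> (\<forall>x\<in>X. (p x \<in> {x\<in>X. lab t \<chi> x}) = (x \<notin> {x\<in>X. lab t \<chi> x}))"
proof -
  have "\<And>x. x \<in> X \<Longrightarrow> p x \<in> X" using assms unfolding Inv_def by auto
  then show ?thesis unfolding cmpt_def by auto
qed




lemma card2_other:
  assumes "card e = 2" "u \<in> e"
  shows "\<exists>v. e - {u} = {v} \<and> v \<noteq> u \<and> v \<in> e"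
proof -
  have "\<exists>a b. e = {a, b} \<and> a \<noteq> b" using assms(1) by (simp add: card_2_iff)
  then obtain a b where ab: "e = {a, b}" "a \<noteq> b" by blast
  show ?thesis
  proof (cases "u = a")
    case True
    have "e - {u} = {b}" using ab True by auto
    moreover have "b \<noteq> u" "b \<in> e" using ab True by auto
    ultimately show ?thesis by blast
  next
    case False then have ub: "u = b" using assms(2) ab by auto
    have "e - {u} = {a}" using ab ub by auto
    moreover have "a \<noteq> u" "a \<in> e" using ab ub by auto
    ultimately show ?thesis by blast
  qed
qed

lemma inj_step:
  assumes finE: "finite E" and Ep: "\<forall>e\<in>E. finite e \<and> card e = 2 \<and> e \<subseteq> V"
    and c: "\<forall>e\<in>E. c e \<in> e"
    and cross: "\<forall>e\<in>E. \<forall>u\<in>e. \<forall>v\<in>e. u \<noteq> v \<longrightarrow> t2 e u \<noteq> t2 e v"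
    and TE: "T \<subseteq> E" and pI: "p \<in> Inv (darts T)"
  shows "card {\<chi>\<in>fib E V r t1 D T. cmpt t1 \<chi> p (darts T)}
       \<le> card {\<chi>\<in>fib E V r t2 D T. cmpt t2 \<chi> p (darts T)}"
proof (cases "{\<chi>\<in>fib E V r t1 D T. cmpt t1 \<chi> p (darts T)} = {}")
  case True then show ?thesis by (metis card.empty le0)
next
  case False
  let ?A = "{\<chi>\<in>fib E V r t1 D T. cmpt t1 \<chi> p (darts T)}"
  let ?B = "{\<chi>\<in>fib E V r t2 D T. cmpt t2 \<chi> p (darts T)}"
  let ?X = "darts T"
  obtain \<chi>0 where \<chi>0: "\<chi>0 \<in> ?A" using False by blast
  have fe: "\<forall>e\<in>E. finite e" using Ep by simp
  have Ecard: "\<And>e. e \<in> E \<Longrightarrow> card e = 2" using Ep by simp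
  have Tcard: "\<And>e. e \<in> T \<Longrightarrow> card e = 2" using Ecard TE by (meson subsetD)
  define q where "q x = (fst x, the_elem (fst x - {snd x}))" for x :: "'a set \<times> 'a"
  have qoth: "\<And>e u v. e \<in> T \<Longrightarrow> u \<in> e \<Longrightarrow> v \<in> e \<Longrightarrow> v \<noteq> u \<Longrightarrow> q (e, u) = (e, v)"
  proof -
    fix e u v assume e: "e \<in> T" "u \<in> e" "v \<in> e" "v \<noteq> u"
    have "card e = 2" using Tcard e(1) by simp
    then obtain w where w: "e - {u} = {w}" using card2_other[of e u] e(2) by blast
    have "v \<in> e - {u}" using e(3,4) by simp
    then have "w = v" using w by simp
    then show "q (e, u) = (e, v)" unfolding q_def using w by simp
  qed
  have qX: "\<forall>x\<in>?X. q x \<in> ?X \<and> q (q x) = x \<and> q x \<noteq> x"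
  proof
    fix x assume x: "x \<in> ?X"
    obtain e u where eu: "x = (e, u)" "e \<in> T" "u \<in> e" using x unfolding darts_def by blast
    have "card e = 2" using Tcard eu(2) by simp
    then obtain v where v: "e - {u} = {v}" "v \<noteq> u" "v \<in> e" using card2_other[of e u] eu(3) by blast
    have q1: "q x = (e, v)" using qoth[OF eu(2,3) v(3,2)] eu(1) by simp
    have q2: "q (e, v) = (e, u)" using qoth[OF eu(2) v(3) eu(3)] v(2) by simp
    show "q x \<in> ?X \<and> q (q x) = x \<and> q x \<noteq> x" using q1 q2 eu v unfolding darts_def by auto
  qed
  have pX: "\<forall>x\<in>?X. p x \<in> ?X \<and> p (p x) = x \<and> p x \<noteq> x" using pI unfolding Inv_def by auto
  have finX: "finite ?X" using finite_darts[OF finE fe TE] .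
  obtain f :: "'a set \<times> 'a \<Rightarrow> bool" where f: "\<forall>x\<in>?X. f (p x) \<noteq> f x \<and> f (q x) \<noteq> f x"
    using two_color[OF finX pX qX] by blast
  define kg where "kg e = (f (e, c e) \<noteq> t2 e (c e))" for e
  have fkey: "\<And>e u. (e, u) \<in> ?X \<Longrightarrow> (kg e \<noteq> t2 e u) = f (e, u)"
  proof -
    fix e u assume x: "(e, u) \<in> ?X"
    then have eT: "e \<in> T" and ue: "u \<in> e" unfolding darts_def by auto
    have ce: "c e \<in> e" using c eT TE by blast
    show "(kg e \<noteq> t2 e u) = f (e, u)"
    proof (cases "u = c e")
      case True then show ?thesis unfolding kg_def by (cases "f (e, c e)"; cases "t2 e (c e)"; simp)
    next
      case False
      have tt: "t2 e (c e) \<noteq> t2 e u" using cross eT TE ce ue False by blast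
      have "q (e, c e) = (e, u)" using qoth[OF eT ce ue False] .
      moreover have "(e, c e) \<in> ?X" using eT ce unfolding darts_def by blast
      ultimately have "f (e, u) \<noteq> f (e, c e)" using f by metis
      then show ?thesis using tt unfolding kg_def by auto
    qed
  qed
  define \<Phi> where "\<Phi> \<chi> = restrict (\<lambda>e. if e \<in> T then {(the_elem (\<chi> e) \<noteq> the_elem (\<chi>0 e)) \<noteq> kg e} else \<chi> e) E"
    for \<chi> :: "'a set \<Rightarrow> bool set"
  have fibD: "\<And>t \<chi>. \<chi> \<in> fib E V r t D T \<Longrightarrow> \<chi> \<in> E \<rightarrow>\<^sub>E UNIV \<and> Dof E \<chi> = D \<and> Tof E \<chi> = T
       \<and> (\<forall>u\<in>V. \<forall>i. int (degc E t \<chi> u i) = r u)"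
    unfolding fib_def valid_def by blast
  have sing: "\<And>t \<chi> e. \<chi> \<in> fib E V r t D T \<Longrightarrow> e \<in> T \<Longrightarrow> \<chi> e = {the_elem (\<chi> e)}"
  proof -
    fix t \<chi> e assume "\<chi> \<in> fib E V r t D T" "e \<in> T"
    then have "card (\<chi> e) = 1" using fibD unfolding Tof_def by blast
    then obtain k where "\<chi> e = {k}" by (auto simp: card_1_singleton_iff)
    then show "\<chi> e = {the_elem (\<chi> e)}" by simp
  qed
  have DTd: "D \<inter> T = {}" using fibD[of \<chi>0 t1] \<chi>0 DT_disj[of E \<chi>0] by auto
  have maps: "\<Phi> \<chi> \<in> ?B" if \<chi>A: "\<chi> \<in> ?A" for \<chi>
  proof -
    have \<chi>f: "\<chi> \<in> fib E V r t1 D T" and \<chi>c: "cmpt t1 \<chi> p ?X" using \<chi>A by auto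
    have \<chi>0f: "\<chi>0 \<in> fib E V r t1 D T" and \<chi>0c: "cmpt t1 \<chi>0 p ?X" using \<chi>0 by auto
    have \<chi>D: "Dof E \<chi> = D" "Tof E \<chi> = T" "\<chi> \<in> E \<rightarrow>\<^sub>E UNIV" using fibD[OF \<chi>f] by auto
    have PiE: "\<Phi> \<chi> \<in> E \<rightarrow>\<^sub>E UNIV" unfolding \<Phi>_def by simp
    have \<Phi>T: "\<And>e. e \<in> T \<Longrightarrow> \<Phi> \<chi> e = {(the_elem (\<chi> e) \<noteq> the_elem (\<chi>0 e)) \<noteq> kg e}"
      unfolding \<Phi>_def using TE by auto
    have \<Phi>N: "\<And>e. e \<in> E \<Longrightarrow> e \<notin> T \<Longrightarrow> \<Phi> \<chi> e = \<chi> e" unfolding \<Phi>_def by auto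
    have DofP: "Dof E (\<Phi> \<chi>) = D"
    proof -
      have "\<And>e. e \<in> E \<Longrightarrow> (\<Phi> \<chi> e = UNIV) = (\<chi> e = UNIV)"
      proof -
        fix e assume e: "e \<in> E"
        show "(\<Phi> \<chi> e = UNIV) = (\<chi> e = UNIV)"
        proof (cases "e \<in> T")
          case True
          have "\<Phi> \<chi> e \<noteq> UNIV" using \<Phi>T[OF True] by (metis UNIV_I empty_iff insert_iff)
          moreover have "\<chi> e \<noteq> UNIV" using sing[OF \<chi>f True] by (metis UNIV_I empty_iff insert_iff)
          ultimately show ?thesis by simp
        next
          case False then show ?thesis using \<Phi>N e by simp
        qed
      qed
      then show ?thesis using \<chi>D(1) unfolding Dof_def by auto
    qed
    have TofP: "Tof E (\<Phi> \<chi>) = T"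
    proof -
      have "\<And>e. e \<in> E \<Longrightarrow> (card (\<Phi> \<chi> e) = 1) = (e \<in> T)"
      proof -
        fix e assume e: "e \<in> E"
        show "(card (\<Phi> \<chi> e) = 1) = (e \<in> T)"
        proof (cases "e \<in> T")
          case True then show ?thesis using \<Phi>T[OF True] by simp
        next
          case False
          then have "card (\<chi> e) \<noteq> 1" using \<chi>D(2) e unfolding Tof_def by blast
          then show ?thesis using \<Phi>N e False by simp
        qed
      qed
      then show ?thesis using TE unfolding Tof_def by auto
    qed
    have labk: "\<And>x. x \<in> ?X \<Longrightarrow> lab t2 (\<Phi> \<chi>) x = ((lab t1 \<chi> x \<noteq> lab t1 \<chi>0 x) \<noteq> f x)"
    proof -
      fix x assume x: "x \<in> ?X"
      obtain e u where eu: "x = (e, u)" "e \<in> T" using x unfolding darts_def by blast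
      have fk: "(kg e \<noteq> t2 e u) = f (e, u)" using fkey x eu(1) by blast
      show "lab t2 (\<Phi> \<chi>) x = ((lab t1 \<chi> x \<noteq> lab t1 \<chi>0 x) \<noteq> f x)"
        unfolding lab_def eu(1) using \<Phi>T[OF eu(2)] fk by auto
    qed
    have cP: "cmpt t2 (\<Phi> \<chi>) p ?X"
      unfolding cmpt_def
    proof
      fix x assume x: "x \<in> ?X"
      have px: "p x \<in> ?X" using pX x by blast
      have a1: "lab t1 \<chi> (p x) \<noteq> lab t1 \<chi> x" using \<chi>c x unfolding cmpt_def by blast
      have a2: "lab t1 \<chi>0 (p x) \<noteq> lab t1 \<chi>0 x" using \<chi>0c x unfolding cmpt_def by blast
      have a3: "f (p x) \<noteq> f x" using f x by blast
      show "lab t2 (\<Phi> \<chi>) (p x) \<noteq> lab t2 (\<Phi> \<chi>) x"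
        unfolding labk[OF x] labk[OF px] using a1 a2 a3 by auto
    qed
    have degeq: "\<And>u i. degc E t2 (\<Phi> \<chi>) u i = degc E t1 \<chi> u i"
    proof -
      fix u i
      have pI2: "p \<in> Inv (darts (Tof E (\<Phi> \<chi>)))" using pI TofP by simp
      have cP2: "cmpt t2 (\<Phi> \<chi>) p (darts (Tof E (\<Phi> \<chi>)))" using cP TofP by simp
      have pI1: "p \<in> Inv (darts (Tof E \<chi>))" using pI \<chi>D by simp
      have cP1: "cmpt t1 \<chi> p (darts (Tof E \<chi>))" using \<chi>c \<chi>D by simp
      have "2 * degc E t2 (\<Phi> \<chi>) u i = 2 * card {e\<in>D. u \<in> e} + card {x\<in>?X. snd x = u}"
        using deg_compat[OF finE fe pI2 cP2, of u i] DofP TofP by simp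
      moreover have "2 * degc E t1 \<chi> u i = 2 * card {e\<in>D. u \<in> e} + card {x\<in>?X. snd x = u}"
        using deg_compat[OF finE fe pI1 cP1, of u i] \<chi>D by simp
      ultimately show "degc E t2 (\<Phi> \<chi>) u i = degc E t1 \<chi> u i" by simp
    qed
    have "\<Phi> \<chi> \<in> valid E V r t2"
      unfolding valid_def using PiE degeq fibD[OF \<chi>f] by simp
    then have "\<Phi> \<chi> \<in> fib E V r t2 D T" unfolding fib_def using DofP TofP by blast
    then show ?thesis using cP by blast
  qed
  have inj: "inj_on \<Phi> ?A"
  proof (rule inj_onI)
    fix \<chi>1 \<chi>2 assume a1: "\<chi>1 \<in> ?A" and a2: "\<chi>2 \<in> ?A" and e: "\<Phi> \<chi>1 = \<Phi> \<chi>2"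
    have f1: "\<chi>1 \<in> fib E V r t1 D T" and f2: "\<chi>2 \<in> fib E V r t1 D T" using a1 a2 by auto
    show "\<chi>1 = \<chi>2"
    proof (rule PiE_ext)
      show "\<chi>1 \<in> E \<rightarrow>\<^sub>E UNIV" "\<chi>2 \<in> E \<rightarrow>\<^sub>E UNIV" using fibD[OF f1] fibD[OF f2] by auto
      fix e assume eE: "e \<in> E"
      have ee: "\<Phi> \<chi>1 e = \<Phi> \<chi>2 e" using e by simp
      show "\<chi>1 e = \<chi>2 e"
      proof (cases "e \<in> T")
        case True
        then have "the_elem (\<chi>1 e) = the_elem (\<chi>2 e)" using ee eE unfolding \<Phi>_def by auto
        moreover obtain k1 k2 where "\<chi>1 e = {k1}" "\<chi>2 e = {k2}" using sing[OF f1 True] sing[OF f2 True] by blast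
        ultimately show ?thesis by simp
      next
        case False then show ?thesis using ee eE unfolding \<Phi>_def by simp
      qed
    qed
  qed
  have finB: "finite ?B"
  proof (rule finite_subset)
    show "?B \<subseteq> E \<rightarrow>\<^sub>E UNIV" unfolding fib_def valid_def by blast
    show "finite (E \<rightarrow>\<^sub>E (UNIV :: bool set set))" using finE by (intro finite_PiE) auto
  qed
  show ?thesis
  proof (rule card_inj_on_le[OF inj])
    show "\<Phi> ` ?A \<subseteq> ?B" using maps by blast
    show "finite ?B" by (rule finB)
  qed
qed


lemma finite_fib: "finite E \<Longrightarrow> finite (fib E V r t D T)"
  by (rule finite_subset[of _ "E \<rightarrow>\<^sub>E (UNIV :: bool set set)"]) (auto simp: fib_def valid_def intro: finite_PiE)

lemma card_double:
  assumes "finite A" "finite B"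
  shows "(\<Sum>x\<in>A. card {y\<in>B. R x y}) = (\<Sum>y\<in>B. card {x\<in>A. R x y})"
  using sum.swap_restrict[OF assms, of "\<lambda>x y. (1::nat)" R] by simp

lemma fib_le:
  assumes finE: "finite E" and Ep: "\<forall>e\<in>E. finite e \<and> card e = 2 \<and> e \<subseteq> V"
    and c: "\<forall>e\<in>E. c e \<in> e"
    and cross: "\<forall>e\<in>E. \<forall>u\<in>e. \<forall>v\<in>e. u \<noteq> v \<longrightarrow> t2 e u \<noteq> t2 e v"
  shows "card (fib E V r t1 D T) \<le> card (fib E V r t2 D T)"
proof (cases "fib E V r t1 D T = {}")
  case True then show ?thesis by (metis card.empty le0)
next
  case False
  then obtain \<chi>0 where \<chi>0: "\<chi>0 \<in> fib E V r t1 D T" by blast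
  have fe: "\<forall>e\<in>E. finite e" using Ep by simp
  have fev: "\<forall>e\<in>E. finite e \<and> e \<subseteq> V" using Ep by simp
  have TT: "\<And>t \<chi>. \<chi> \<in> fib E V r t D T \<Longrightarrow> Tof E \<chi> = T" unfolding fib_def by blast
  have TE: "T \<subseteq> E" using TT[OF \<chi>0] unfolding Tof_def by blast
  let ?X = "darts T"
  have finX: "finite ?X" using finite_darts[OF finE fe TE] .
  have balZ: "\<And>t \<chi>. \<chi> \<in> fib E V r t D T \<Longrightarrow> bal ?X {x\<in>?X. lab t \<chi> x}"
  proof -
    fix t \<chi> assume a: "\<chi> \<in> fib E V r t D T"
    have "\<chi> \<in> valid E V r t" using a unfolding fib_def by blast
    then show "bal ?X {x\<in>?X. lab t \<chi> x}" using valid_bal[OF finE fev] TT[OF a] by metis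
  qed
  define C where "C = cnt ?X {x\<in>?X. lab t1 \<chi>0 x}"
  have Cpos: "C > 0" unfolding C_def by (rule cnt_pos[OF finX balZ[OF \<chi>0]])
  have cntC: "\<And>t \<chi>. \<chi> \<in> fib E V r t D T \<Longrightarrow> card {p\<in>Inv ?X. cmpt t \<chi> p ?X} = C"
  proof -
    fix t \<chi> assume a: "\<chi> \<in> fib E V r t D T"
    have "{p\<in>Inv ?X. cmpt t \<chi> p ?X} = {p\<in>Inv ?X. \<forall>x\<in>?X. (p x \<in> {x\<in>?X. lab t \<chi> x}) = (x \<notin> {x\<in>?X. lab t \<chi> x})}"
      using compat_iff by blast
    then have "card {p\<in>Inv ?X. cmpt t \<chi> p ?X} = cnt ?X {x\<in>?X. lab t \<chi> x}" unfolding cnt_def by simp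
    moreover have "cnt ?X {x\<in>?X. lab t \<chi> x} = C" unfolding C_def
      using cnt_le[OF finX balZ[OF a] balZ[OF \<chi>0]] cnt_le[OF finX balZ[OF \<chi>0] balZ[OF a]] by simp
    ultimately show "card {p\<in>Inv ?X. cmpt t \<chi> p ?X} = C" by simp
  qed
  have finI: "finite (Inv ?X)" using finite_Inv[OF finX] .
  have key: "\<And>t. C * card (fib E V r t D T) = (\<Sum>p\<in>Inv ?X. card {\<chi>\<in>fib E V r t D T. cmpt t \<chi> p ?X})"
  proof -
    fix t
    have "(\<Sum>\<chi>\<in>fib E V r t D T. card {p\<in>Inv ?X. cmpt t \<chi> p ?X}) = (\<Sum>\<chi>\<in>fib E V r t D T. C)"
      using cntC by (meson sum.cong)
    also have "\<dots> = C * card (fib E V r t D T)" by simp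
    finally have "C * card (fib E V r t D T) = (\<Sum>\<chi>\<in>fib E V r t D T. card {p\<in>Inv ?X. cmpt t \<chi> p ?X})" by simp
    also have "\<dots> = (\<Sum>p\<in>Inv ?X. card {\<chi>\<in>fib E V r t D T. cmpt t \<chi> p ?X})"
      by (rule card_double[OF finite_fib[OF finE] finI])
    finally show "C * card (fib E V r t D T) = (\<Sum>p\<in>Inv ?X. card {\<chi>\<in>fib E V r t D T. cmpt t \<chi> p ?X})" .
  qed
  have "(\<Sum>p\<in>Inv ?X. card {\<chi>\<in>fib E V r t1 D T. cmpt t1 \<chi> p ?X})
      \<le> (\<Sum>p\<in>Inv ?X. card {\<chi>\<in>fib E V r t2 D T. cmpt t2 \<chi> p ?X})"
  proof (rule sum_mono)
    fix p assume "p \<in> Inv ?X"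
    then show "card {\<chi>\<in>fib E V r t1 D T. cmpt t1 \<chi> p ?X} \<le> card {\<chi>\<in>fib E V r t2 D T. cmpt t2 \<chi> p ?X}"
      by (rule inj_step[OF finE Ep c cross TE])
  qed
  then have "C * card (fib E V r t1 D T) \<le> C * card (fib E V r t2 D T)" using key by simp
  then show ?thesis using Cpos by simp
qed

lemma valid_le:
  assumes finE: "finite E" and Ep: "\<forall>e\<in>E. finite e \<and> card e = 2 \<and> e \<subseteq> V"
    and c: "\<forall>e\<in>E. c e \<in> e"
    and cross: "\<forall>e\<in>E. \<forall>u\<in>e. \<forall>v\<in>e. u \<noteq> v \<longrightarrow> t2 e u \<noteq> t2 e v"
  shows "card (valid E V r t1) \<le> card (valid E V r t2)"
proof -
  have finP: "finite (Pow E \<times> Pow E)" using finE by simp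
  have grp: "\<And>t. card (valid E V r t) = (\<Sum>DT\<in>Pow E \<times> Pow E. card (fib E V r t (fst DT) (snd DT)))"
  proof -
    fix t
    have finV: "finite (valid E V r t)"
      by (rule finite_subset[of _ "E \<rightarrow>\<^sub>E (UNIV :: bool set set)"]) (auto simp: valid_def intro: finite_PiE finE)
    have img: "(\<lambda>\<chi>. (Dof E \<chi>, Tof E \<chi>)) ` valid E V r t \<subseteq> Pow E \<times> Pow E"
      unfolding Dof_def Tof_def by blast
    have "(\<Sum>DT\<in>Pow E \<times> Pow E. sum (\<lambda>_. 1::nat) {\<chi>. \<chi> \<in> valid E V r t \<and> (Dof E \<chi>, Tof E \<chi>) = DT})
        = sum (\<lambda>_. 1) (valid E V r t)"
      by (rule sum.group[OF finV finP img])
    moreover have "\<And>DT. {\<chi>. \<chi> \<in> valid E V r t \<and> (Dof E \<chi>, Tof E \<chi>) = DT} = fib E V r t (fst DT) (snd DT)"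
      unfolding fib_def by (auto simp: prod_eq_iff)
    ultimately show "card (valid E V r t) = (\<Sum>DT\<in>Pow E \<times> Pow E. card (fib E V r t (fst DT) (snd DT)))"
      by simp
  qed
  show ?thesis unfolding grp
    by (rule sum_mono) (rule fib_le[OF finE Ep c cross])
qed




definition cpt :: "'a set \<Rightarrow> 'a" where "cpt e = (SOME u. u \<in> e)"
definition opt :: "'a set \<Rightarrow> 'a" where "opt e = the_elem (e - {cpt e})"
definition Lf :: "('a set \<Rightarrow> bool) \<Rightarrow> 'a set \<Rightarrow> bool \<Rightarrow> ('a \<times> bool) set" where
  "Lf s e k = {(cpt e, k), (opt e, if s e then k else \<not> k)}"
definition tf :: "('a set \<Rightarrow> bool) \<Rightarrow> 'a set \<Rightarrow> 'a \<Rightarrow> bool" where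
  "tf s e u = (u \<noteq> cpt e \<and> \<not> s e)"

lemma cpt_opt:
  assumes "card e = 2"
  shows "cpt e \<in> e" "opt e \<in> e" "opt e \<noteq> cpt e" "{cpt e, opt e} = e"
proof -
  have ne: "e \<noteq> {}" using assms by auto
  show c: "cpt e \<in> e" unfolding cpt_def using ne by (simp add: some_in_eq)
  obtain v where v: "e - {cpt e} = {v}" "v \<noteq> cpt e" "v \<in> e" using card2_other[OF assms c] by blast
  have o: "opt e = v" unfolding opt_def using v(1) by simp
  show "opt e \<in> e" "opt e \<noteq> cpt e" using o v by auto
  show "{cpt e, opt e} = e" using o v(1) c by blast
qed

lemma Lf_mem:
  assumes "card e = 2"
  shows "(u, i) \<in> Lf s e k \<longleftrightarrow> u \<in> e \<and> (k \<noteq> tf s e u) = i"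
proof -
  note co = cpt_opt[OF assms]
  have ue: "u \<in> e \<longleftrightarrow> u = cpt e \<or> u = opt e" using co(4) by blast
  show ?thesis
  proof (cases "u = cpt e")
    case True then show ?thesis unfolding Lf_def tf_def using co by auto
  next
    case False then show ?thesis unfolding Lf_def tf_def using co ue by auto
  qed
qed

lemma Lf_fst:
  assumes "card e = 2"
  shows "fst ` Lf s e k = e"
proof -
  have "fst ` Lf s e k = {cpt e, opt e}" unfolding Lf_def by simp
  from this cpt_opt(4)[OF assms] show ?thesis by (rule trans)
qed

lemma Lf_inj:
  assumes "card e = 2" "card e' = 2" "Lf s e k = Lf s e' k'"
  shows "e = e' \<and> k = k'"
proof -
  have ee: "e = e'" using Lf_fst[OF assms(1), of s k] Lf_fst[OF assms(2), of s k'] assms(3) by metis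
  have "(cpt e, k) \<in> Lf s e k" unfolding Lf_def by simp
  then have "(cpt e, k) \<in> Lf s e' k'" using assms(3) by simp
  then have "(cpt e \<in> e) \<and> (k' \<noteq> tf s e (cpt e)) = k" using Lf_mem[OF assms(1)] ee by simp
  then have "k' = k" unfolding tf_def by simp
  then show ?thesis using ee by simp
qed

lemma cover_eq:
  assumes "\<forall>e\<in>E. card e = 2"
  shows "cover_edges E s = (\<lambda>(e,k). Lf s e k) ` (E \<times> UNIV)"
proof (intro equalityI subsetI)
  fix l assume "l \<in> cover_edges E s"
  then obtain u v i j where l: "l = {(u, i), (v, j)}" "{u, v} \<in> E" "u \<noteq> v"
    "if s {u, v} then i = j else i \<noteq> j" unfolding cover_edges_def by blast
  define e where "e = {u, v}"
  have ce: "card e = 2" using assms l(2) e_def by blast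
  note co = cpt_opt[OF ce]
  have uv: "(u = cpt e \<and> v = opt e) \<or> (u = opt e \<and> v = cpt e)"
    using co(3,4) l(3) unfolding e_def by (metis doubleton_eq_iff)
  have se: "s {u, v} = s e" unfolding e_def ..
  have l4: "if s e then i = j else i \<noteq> j" using l(4) unfolding se .
  have eE: "e \<in> E" using l(2) unfolding e_def .
  show "l \<in> (\<lambda>(e,k). Lf s e k) ` (E \<times> UNIV)"
  proof (cases "u = cpt e \<and> v = opt e")
    case True
    have jj: "j = (if s e then i else \<not> i)" using l4 by (cases "s e") auto
    have "l = Lf s e i" unfolding Lf_def l(1) using True jj by simp
    then show ?thesis using eE by blast
  next
    case False
    then have F: "u = opt e" "v = cpt e" using uv by blast+
    have ii: "i = (if s e then j else \<not> j)" using l4 by (cases "s e") auto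
    have "l = Lf s e j" unfolding Lf_def l(1) using F ii by (simp add: insert_commute)
    then show ?thesis using eE by blast
  qed
next
  fix l assume "l \<in> (\<lambda>(e,k). Lf s e k) ` (E \<times> UNIV)"
  then obtain ek where ek0: "ek \<in> E \<times> UNIV" "l = (\<lambda>(e,k). Lf s e k) ek" by (rule imageE)
  obtain e k where "ek = (e, k)" by fastforce
  then have ek: "e \<in> E" "l = Lf s e k" using ek0 by auto
  have ce: "card e = 2" using assms ek(1) by blast
  note co = cpt_opt[OF ce]
  have inE: "{cpt e, opt e} \<in> E" using co(4) ek(1) by simp
  have leq: "l = {(cpt e, k), (opt e, if s e then k else \<not> k)}" using ek(2) unfolding Lf_def by simp
  have ifa: "if s {cpt e, opt e} then k = (if s e then k else \<not> k) else k \<noteq> (if s e then k else \<not> k)"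
    using co(4) by simp
  have neq: "cpt e \<noteq> opt e" using co(3) by simp
  show "l \<in> cover_edges E s" unfolding cover_edges_def
    using leq inE neq ifa
    by (intro CollectI exI[of _ "cpt e"] exI[of _ "opt e"] exI[of _ k] exI[of _ "if s e then k else \<not> k"] conjI)
qed


lemma hcount_valid:
  assumes finE: "finite E" and E2: "\<forall>e\<in>E. card e = 2"
  shows "h_count (V \<times> UNIV) (cover_edges E s) (\<lambda>x. r (fst x)) = card (valid E V r (tf s))"
proof -
  define L where "L = (\<lambda>(e,k). Lf s e k)"
  define \<Phi> where "\<Phi> \<chi> = L ` (SIGMA e:E. \<chi> e)" for \<chi> :: "'a set \<Rightarrow> bool set"
  have Lek: "\<And>e k. L (e, k) = Lf s e k" unfolding L_def by simp
  have injL: "inj_on L (E \<times> UNIV)"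
  proof (rule inj_onI)
    fix x y assume x: "x \<in> E \<times> UNIV" and y: "y \<in> E \<times> UNIV" and e: "L x = L y"
    obtain e1 k1 where 1: "x = (e1, k1)" by fastforce
    obtain e2 k2 where 2: "y = (e2, k2)" by fastforce
    have "e1 \<in> E" "e2 \<in> E" using x y 1 2 by auto
    then have "card e1 = 2" "card e2 = 2" using E2 by auto
    moreover have "Lf s e1 k1 = Lf s e2 k2" using e 1 2 Lek by simp
    ultimately have "e1 = e2 \<and> k1 = k2" by (rule Lf_inj)
    then show "x = y" using 1 2 by simp
  qed
  have memPhi: "\<And>\<chi> e k. e \<in> E \<Longrightarrow> Lf s e k \<in> \<Phi> \<chi> \<longleftrightarrow> k \<in> \<chi> e"
  proof -
    fix \<chi> e k assume eE: "e \<in> E"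
    show "Lf s e k \<in> \<Phi> \<chi> \<longleftrightarrow> k \<in> \<chi> e"
    proof
      assume "Lf s e k \<in> \<Phi> \<chi>"
      then obtain y where y: "y \<in> (SIGMA e:E. \<chi> e)" "Lf s e k = L y" unfolding \<Phi>_def by blast
      have "(e, k) \<in> E \<times> UNIV" "y \<in> E \<times> UNIV" using eE y(1) by auto
      moreover have "L (e, k) = L y" using y(2) Lek by simp
      ultimately have "(e, k) = y" using injL by (meson inj_onD)
      then show "k \<in> \<chi> e" using y(1) by auto
    next
      assume "k \<in> \<chi> e"
      then have "(e, k) \<in> (SIGMA e:E. \<chi> e)" using eE by blast
      then show "Lf s e k \<in> \<Phi> \<chi>" unfolding \<Phi>_def using Lek by (metis imageI)
    qed
  qed
  have degPhi: "\<And>\<chi> u i. card {l\<in>\<Phi> \<chi>. (u, i) \<in> l} = degc E (tf s) \<chi> u i"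
  proof -
    fix \<chi> u i
    have sub: "{x\<in>(SIGMA e:E. \<chi> e). (u, i) \<in> L x} \<subseteq> E \<times> UNIV" by blast
    have "{l\<in>\<Phi> \<chi>. (u, i) \<in> l} = L ` {x\<in>(SIGMA e:E. \<chi> e). (u, i) \<in> L x}" unfolding \<Phi>_def by blast
    then have "card {l\<in>\<Phi> \<chi>. (u, i) \<in> l} = card {x\<in>(SIGMA e:E. \<chi> e). (u, i) \<in> L x}"
      using card_image[OF inj_on_subset[OF injL sub]] by simp
    moreover have "{x\<in>(SIGMA e:E. \<chi> e). (u, i) \<in> L x} = {(e,k). e \<in> E \<and> u \<in> e \<and> k \<in> \<chi> e \<and> (k \<noteq> tf s e u) = i}"
    proof (intro equalityI subsetI)
      fix x assume x: "x \<in> {x\<in>(SIGMA e:E. \<chi> e). (u, i) \<in> L x}"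
      obtain e k where ek: "x = (e, k)" by fastforce
      have eE: "e \<in> E" "k \<in> \<chi> e" "(u, i) \<in> Lf s e k" using x ek Lek by auto
      have "u \<in> e \<and> (k \<noteq> tf s e u) = i" using eE(3) Lf_mem[of e u i s k] E2 eE(1) by simp
      then show "x \<in> {(e,k). e \<in> E \<and> u \<in> e \<and> k \<in> \<chi> e \<and> (k \<noteq> tf s e u) = i}" using ek eE by simp
    next
      fix x assume x: "x \<in> {(e,k). e \<in> E \<and> u \<in> e \<and> k \<in> \<chi> e \<and> (k \<noteq> tf s e u) = i}"
      obtain e k where ek: "x = (e, k)" by fastforce
      have eE: "e \<in> E" "u \<in> e" "k \<in> \<chi> e" "(k \<noteq> tf s e u) = i" using x ek by auto
      have "(u, i) \<in> Lf s e k" using Lf_mem[of e u i s k] E2 eE by simp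
      then show "x \<in> {x\<in>(SIGMA e:E. \<chi> e). (u, i) \<in> L x}" using ek eE Lek by simp
    qed
    ultimately show "card {l\<in>\<Phi> \<chi>. (u, i) \<in> l} = degc E (tf s) \<chi> u i" unfolding degc_def by simp
  qed
  have EH: "cover_edges E s = L ` (E \<times> UNIV)" unfolding L_def by (rule cover_eq[OF E2])
  have Pcond: "\<And>\<chi>. (\<forall>v\<in>V \<times> UNIV. int (card {l\<in>\<Phi> \<chi>. v \<in> l}) = r (fst v)) \<longleftrightarrow>
                    (\<forall>u\<in>V. \<forall>i. int (degc E (tf s) \<chi> u i) = r u)"
    using degPhi by auto
  have seteq: "{S. S \<subseteq> cover_edges E s \<and> (\<forall>v\<in>V \<times> UNIV. int (card {e\<in>S. v \<in> e}) = r (fst v))}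
      = \<Phi> ` valid E V r (tf s)"
  proof (intro equalityI subsetI)
    fix S assume S: "S \<in> {S. S \<subseteq> cover_edges E s \<and> (\<forall>v\<in>V \<times> UNIV. int (card {e\<in>S. v \<in> e}) = r (fst v))}"
    define \<chi> where "\<chi> = (\<lambda>e\<in>E. {k. Lf s e k \<in> S})"
    have \<chi>P: "\<chi> \<in> E \<rightarrow>\<^sub>E UNIV" unfolding \<chi>_def by simp
    have "\<Phi> \<chi> = S"
    proof (intro equalityI subsetI)
      fix l assume "l \<in> \<Phi> \<chi>"
      then obtain e k where "e \<in> E" "k \<in> \<chi> e" "l = Lf s e k" unfolding \<Phi>_def L_def by auto
      then show "l \<in> S" unfolding \<chi>_def by simp
    next
      fix l assume l: "l \<in> S"
      then have "l \<in> L ` (E \<times> UNIV)" using S EH by auto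
      then obtain e k where ek: "e \<in> E" "l = Lf s e k" unfolding L_def by auto
      then have "k \<in> \<chi> e" using l unfolding \<chi>_def by simp
      then show "l \<in> \<Phi> \<chi>" using memPhi ek by simp
    qed
    moreover have "\<chi> \<in> valid E V r (tf s)"
      unfolding valid_def using \<chi>P Pcond[of \<chi>] S \<open>\<Phi> \<chi> = S\<close> by simp
    ultimately show "S \<in> \<Phi> ` valid E V r (tf s)" by blast
  next
    fix S assume "S \<in> \<Phi> ` valid E V r (tf s)"
    then obtain \<chi> where \<chi>: "\<chi> \<in> valid E V r (tf s)" "S = \<Phi> \<chi>" by blast
    have "S \<subseteq> cover_edges E s" unfolding EH \<chi>(2) \<Phi>_def by blast
    moreover have "\<forall>v\<in>V \<times> UNIV. int (card {e\<in>S. v \<in> e}) = r (fst v)"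
      using Pcond[of \<chi>] \<chi> unfolding valid_def by simp
    ultimately show "S \<in> {S. S \<subseteq> cover_edges E s \<and> (\<forall>v\<in>V \<times> UNIV. int (card {e\<in>S. v \<in> e}) = r (fst v))}"
      by blast
  qed
  have injPhi: "inj_on \<Phi> (valid E V r (tf s))"
  proof (rule inj_onI)
    fix \<chi>1 \<chi>2 assume 1: "\<chi>1 \<in> valid E V r (tf s)" and 2: "\<chi>2 \<in> valid E V r (tf s)" and e: "\<Phi> \<chi>1 = \<Phi> \<chi>2"
    show "\<chi>1 = \<chi>2"
    proof (rule PiE_ext)
      show "\<chi>1 \<in> E \<rightarrow>\<^sub>E UNIV" "\<chi>2 \<in> E \<rightarrow>\<^sub>E UNIV" using 1 2 unfolding valid_def by auto
      fix e assume eE: "e \<in> E"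
      show "\<chi>1 e = \<chi>2 e"
      proof (intro equalityI subsetI)
        fix k assume "k \<in> \<chi>1 e" then show "k \<in> \<chi>2 e" using memPhi[OF eE] e by metis
      next
        fix k assume "k \<in> \<chi>2 e" then show "k \<in> \<chi>1 e" using memPhi[OF eE] e by metis
      qed
    qed
  qed
  show ?thesis unfolding h_count_def seteq using card_image[OF injPhi] .
qed


theorem theorem1p8:
  fixes V :: "'a set" and E :: "'a set set" and r :: "'a \<Rightarrow> int"
    and EH :: "('a \<times> bool) set set"
  assumes "simple_graph V E"
    and "two_cover E EH"
  shows "h_count (V \<times> UNIV) EH (\<lambda>x. r (fst x))
           \<le> h_count (V \<times> UNIV) (double_cover_edges E) (\<lambda>x. r (fst x))"
proof -
  have finV: "finite V" and Ep0: "\<forall>e\<in>E. e \<subseteq> V \<and> card e = 2"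
    using assms(1) unfolding simple_graph_def by auto
  have finE: "finite E"
  proof (rule finite_subset)
    show "E \<subseteq> Pow V" using Ep0 by blast
    show "finite (Pow V)" using finV by simp
  qed
  have Ep: "\<forall>e\<in>E. finite e \<and> card e = 2 \<and> e \<subseteq> V"
    using Ep0 finV by (meson finite_subset)
  have E2: "\<forall>e\<in>E. card e = 2" using Ep0 by blast
  obtain s where s: "EH = cover_edges E s" using assms(2) unfolding two_cover_def by blast
  have c: "\<forall>e\<in>E. cpt e \<in> e" using E2 cpt_opt(1) by blast
  have cross: "\<forall>e\<in>E. \<forall>u\<in>e. \<forall>v\<in>e. u \<noteq> v \<longrightarrow> tf (\<lambda>_. False) e u \<noteq> tf (\<lambda>_. False) e v"
  proof (intro ballI impI)
    fix e u v assume e: "e \<in> E" and u: "u \<in> e" and v: "v \<in> e" and uv: "u \<noteq> v"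
    have co: "{cpt e, opt e} = e" using cpt_opt(4) E2 e by blast
    have "u = cpt e \<or> u = opt e" "v = cpt e \<or> v = opt e" using co u v by blast+
    then have "u = cpt e \<or> v = cpt e" "u \<noteq> cpt e \<or> v \<noteq> cpt e" using uv by blast+
    then show "tf (\<lambda>_. False) e u \<noteq> tf (\<lambda>_. False) e v" unfolding tf_def by blast
  qed
  have "h_count (V \<times> UNIV) EH (\<lambda>x. r (fst x)) = card (valid E V r (tf s))"
    unfolding s by (rule hcount_valid[OF finE E2])
  also have "\<dots> \<le> card (valid E V r (tf (\<lambda>_. False)))"
    by (rule valid_le[OF finE Ep c cross])
  also have "\<dots> = h_count (V \<times> UNIV) (double_cover_edges E) (\<lambda>x. r (fst x))"
    unfolding double_cover_edges_def by (rule hcount_valid[OF finE E2, symmetric])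
  finally show ?thesis .
qed


end
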